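(* Let $\mathsf{\Omega}$ be a first-quantized BRST operator of a linear Lagrangian gauge system (odd, of ghost number $1$, nilpotent, and symplectic). For every ghost number $g$, the BRST state cohomology $H^g(\mathsf{\Omega})$ is a module, with the action $[A]\cdot[\phi]=[A\phi]$, of any Lie subalgebra of $H^{0}_{\rm sym}([\mathsf{\Omega},\cdot])$, and thus of any subalgebra of the Lie algebra of equivalence classes of linear variational symmetries.
   Context: Wave functions $\phi=e_\alpha\phi^\alpha(x)$ take values in a superspace with basis elements $e_\alpha$ graded by ghost number and parity, equipped with a constant nondegenerate odd antisymplectic form $\omega(\phi,\chi)=\int d^dx\,\omega_{\alpha\beta}\phi^\alpha\chi^\beta$, $\omega(\phi,\chi)=-(-1)^{|\phi||\chi|}\omega(\chi,\phi)$. A linear differential operator $A$ is symplectic if $\omega(A\phi,\chi)+(-1)^{|A||\phi|}\omega(\phi,A\chi)=0$. $\mathsf{\Omega}$ is odd, of ghost number $1$, symplectic, with $\mathsf{\Omega}^2=0$. $H^g(\mathsf{\Omega})$ is the space of ghost-number-$g$ wave functions $\phi$ with $\mathsf{\Omega}\phi=0$ modulo those of the form $\mathsf{\Omega}\chi$. $H^0_{\rm sym}([\mathsf{\Omega},\cdot])$ is the space of ghost-number-$0$ symplectic operators $K$ with $[\mathsf{\Omega},K]=0$ modulo $[\mathsf{\Omega},T]$ with $T$ symplectic of ghost number $-1$; with the commutator it is a Lie algebra isomorphic to the Lie algebra of equivalence classes of linear variational symmetries. *)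

theory Defs
  imports Complex_Main
begin

text \<open>Abstract model of the space of wave functions: a real vector space 'v with
  ghost-number homogeneous subspaces Vg g (g :: int) and parity homogeneous subspaces
  P p (p :: bool, True = odd), and an odd antisymplectic bilinear form om.
  Linear (differential) operators are modelled as linear maps 'v \<Rightarrow> 'v.\<close>

definition psign :: "bool \<Rightarrow> bool \<Rightarrow> real" where
  "psign p q = (if p \<and> q then -1 else 1)"

definition superspace ::
  "(int \<Rightarrow> 'v::real_vector set) \<Rightarrow> (bool \<Rightarrow> 'v set) \<Rightarrow> ('v \<Rightarrow> 'v \<Rightarrow> real) \<Rightarrow> bool" where
  "superspace Vg P om \<longleftrightarrow>
     (\<forall>g. subspace (Vg g)) \<and> (\<forall>p. subspace (P p)) \<and>
     span (\<Union>g. \<Union>p. Vg g \<inter> P p) = UNIV \<and>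
     (\<forall>x. linear (om x)) \<and> (\<forall>y. linear (\<lambda>x. om x y)) \<and>
     (\<forall>p q x y. x \<in> P p \<longrightarrow> y \<in> P q \<longrightarrow> om x y = - psign p q * om y x) \<and>
     (\<forall>p q x y. x \<in> P p \<longrightarrow> y \<in> P q \<longrightarrow> om x y \<noteq> 0 \<longrightarrow> p \<noteq> q) \<and>
     (\<forall>x. (\<forall>y. om x y = 0) \<longrightarrow> x = 0)"

definition op_ghost :: "(int \<Rightarrow> 'v set) \<Rightarrow> int \<Rightarrow> ('v \<Rightarrow> 'v) \<Rightarrow> bool" where
  "op_ghost Vg k A \<longleftrightarrow> (\<forall>g. \<forall>x\<in>Vg g. A x \<in> Vg (g + k))"

definition op_parity :: "(bool \<Rightarrow> 'v set) \<Rightarrow> bool \<Rightarrow> ('v \<Rightarrow> 'v) \<Rightarrow> bool" where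
  "op_parity P p A \<longleftrightarrow> (\<forall>q. \<forall>x\<in>P q. A x \<in> P (p \<noteq> q))"

definition symplectic ::
  "(bool \<Rightarrow> 'v set) \<Rightarrow> ('v \<Rightarrow> 'v \<Rightarrow> real) \<Rightarrow> bool \<Rightarrow> ('v \<Rightarrow> 'v) \<Rightarrow> bool" where
  "symplectic P om p A \<longleftrightarrow>
     (\<forall>q x y. x \<in> P q \<longrightarrow> om (A x) y + psign p q * om x (A y) = 0)"

definition scomm :: "bool \<Rightarrow> bool \<Rightarrow> ('v::real_vector \<Rightarrow> 'v) \<Rightarrow> ('v \<Rightarrow> 'v) \<Rightarrow> 'v \<Rightarrow> 'v" where
  "scomm pA pB A B = (\<lambda>x. A (B x) - psign pA pB *\<^sub>R B (A x))"

definition brst_op ::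
  "(int \<Rightarrow> 'v::real_vector set) \<Rightarrow> (bool \<Rightarrow> 'v set) \<Rightarrow> ('v \<Rightarrow> 'v \<Rightarrow> real) \<Rightarrow> ('v \<Rightarrow> 'v) \<Rightarrow> bool" where
  "brst_op Vg P om Om \<longleftrightarrow> linear Om \<and> op_ghost Vg 1 Om \<and> op_parity P True Om \<and>
     symplectic P om True Om \<and> (\<forall>x. Om (Om x) = 0)"

definition closed_st :: "(int \<Rightarrow> 'v::real_vector set) \<Rightarrow> ('v \<Rightarrow> 'v) \<Rightarrow> int \<Rightarrow> 'v \<Rightarrow> bool" where
  "closed_st Vg Om g x \<longleftrightarrow> x \<in> Vg g \<and> Om x = 0"

definition exact_st :: "(int \<Rightarrow> 'v::real_vector set) \<Rightarrow> ('v \<Rightarrow> 'v) \<Rightarrow> int \<Rightarrow> 'v \<Rightarrow> bool" where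
  "exact_st Vg Om g x \<longleftrightarrow> (\<exists>y\<in>Vg (g - 1). x = Om y)"

definition coh_eq :: "(int \<Rightarrow> 'v::real_vector set) \<Rightarrow> ('v \<Rightarrow> 'v) \<Rightarrow> int \<Rightarrow> 'v \<Rightarrow> 'v \<Rightarrow> bool" where
  "coh_eq Vg Om g x y \<longleftrightarrow> closed_st Vg Om g x \<and> closed_st Vg Om g y \<and> exact_st Vg Om g (x - y)"

text \<open>Representatives of H^0_sym([Om,.]): even ghost-number-0 symplectic K with [Om,K] = 0.\<close>
definition Zsym ::
  "(int \<Rightarrow> 'v::real_vector set) \<Rightarrow> (bool \<Rightarrow> 'v set) \<Rightarrow> ('v \<Rightarrow> 'v \<Rightarrow> real) \<Rightarrow> ('v \<Rightarrow> 'v) \<Rightarrow> ('v \<Rightarrow> 'v) \<Rightarrow> bool" where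
  "Zsym Vg P om Om K \<longleftrightarrow> linear K \<and> op_ghost Vg 0 K \<and> op_parity P False K \<and>
     symplectic P om False K \<and> (\<forall>x. scomm True False Om K x = 0)"

definition Bsym ::
  "(int \<Rightarrow> 'v::real_vector set) \<Rightarrow> (bool \<Rightarrow> 'v set) \<Rightarrow> ('v \<Rightarrow> 'v \<Rightarrow> real) \<Rightarrow> ('v \<Rightarrow> 'v) \<Rightarrow> ('v \<Rightarrow> 'v) \<Rightarrow> bool" where
  "Bsym Vg P om Om K \<longleftrightarrow> (\<exists>T. linear T \<and> op_ghost Vg (-1) T \<and> op_parity P True T \<and>
     symplectic P om True T \<and> (\<forall>x. K x = scomm True True Om T x))"

definition sym_eq ::
  "(int \<Rightarrow> 'v::real_vector set) \<Rightarrow> (bool \<Rightarrow> 'v set) \<Rightarrow> ('v \<Rightarrow> 'v \<Rightarrow> real) \<Rightarrow> ('v \<Rightarrow> 'v) \<Rightarrow> ('v \<Rightarrow> 'v) \<Rightarrow> ('v \<Rightarrow> 'v) \<Rightarrow> bool" where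
  "sym_eq Vg P om Om K K' \<longleftrightarrow> Zsym Vg P om Om K \<and> Zsym Vg P om Om K' \<and>
     Bsym Vg P om Om (\<lambda>x. K x - K' x)"

end

theory Submission
  imports Defs
begin


lemma zsym_closed:
  assumes S: "superspace Vg P om" and B: "brst_op Vg P om Om"
    and K: "Zsym Vg P om Om K" and x: "closed_st Vg Om g x"
  shows "closed_st Vg Om g (K x)"
proof -
  have "K x \<in> Vg g" using K x unfolding Zsym_def op_ghost_def closed_st_def by force
  moreover have "Om (K x) = K (Om x)" using K unfolding Zsym_def scomm_def psign_def by (metis eq_iff_diff_eq_0 scale_one)
  moreover have "K 0 = 0" using K unfolding Zsym_def using linear_0 by blast
  ultimately show ?thesis using x unfolding closed_st_def by simp
qed

lemma zsym_comm:
  assumes S: "superspace Vg P om" and B: "brst_op Vg P om Om"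
    and K1: "Zsym Vg P om Om K1" and K2: "Zsym Vg P om Om K2"
  shows "Zsym Vg P om Om (scomm False False K1 K2)"
proof -
  have sg: "\<And>g. subspace (Vg g)" and sp: "\<And>p. subspace (P p)"
    and l1: "\<And>x. linear (om x)" and l2: "\<And>y. linear (\<lambda>x. om x y)"
    using S unfolding superspace_def by auto
  have L1: "linear K1" and L2: "linear K2" using K1 K2 unfolding Zsym_def by auto
  have LO: "linear Om" using B unfolding brst_op_def by auto
  have c: "scomm False False K1 K2 = (\<lambda>x. K1 (K2 x) - K2 (K1 x))"
    unfolding scomm_def psign_def by auto
  have lin: "linear (\<lambda>x. K1 (K2 x) - K2 (K1 x))"
    using L1 L2 by (intro linear_compose_sub) (auto intro: linear_compose[unfolded o_def])
  have gh: "op_ghost Vg 0 (\<lambda>x. K1 (K2 x) - K2 (K1 x))"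
    using K1 K2 sg unfolding Zsym_def op_ghost_def by (simp add: subspace_diff)
  have pa: "op_parity P False (\<lambda>x. K1 (K2 x) - K2 (K1 x))"
    using K1 K2 sp unfolding Zsym_def op_parity_def by (simp add: subspace_diff)
  have sy1: "\<And>q x y. x \<in> P q \<Longrightarrow> om (K1 x) y = - om x (K1 y)"
    using K1 unfolding Zsym_def symplectic_def psign_def by (simp add: eq_neg_iff_add_eq_0)
  have sy2: "\<And>q x y. x \<in> P q \<Longrightarrow> om (K2 x) y = - om x (K2 y)"
    using K2 unfolding Zsym_def symplectic_def psign_def by (simp add: eq_neg_iff_add_eq_0)
  have p1: "\<And>q x. x \<in> P q \<Longrightarrow> K1 x \<in> P q" using K1 unfolding Zsym_def op_parity_def by force
  have p2: "\<And>q x. x \<in> P q \<Longrightarrow> K2 x \<in> P q" using K2 unfolding Zsym_def op_parity_def by force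
  have sy: "symplectic P om False (\<lambda>x. K1 (K2 x) - K2 (K1 x))"
    unfolding symplectic_def psign_def
  proof (intro allI impI)
    fix q x y assume x: "x \<in> P q"
    have a: "om (K1 (K2 x)) y = om x (K2 (K1 y))" using sy1[OF p2[OF x]] sy2[OF x] by simp
    have b: "om (K2 (K1 x)) y = om x (K1 (K2 y))" using sy2[OF p1[OF x]] sy1[OF x] by simp
    have "om (K1 (K2 x) - K2 (K1 x)) y = om (K1 (K2 x)) y - om (K2 (K1 x)) y"
      using linear_diff[OF l2[of y]] by simp
    moreover have "om x (K1 (K2 y) - K2 (K1 y)) = om x (K1 (K2 y)) - om x (K2 (K1 y))"
      using linear_diff[OF l1[of x]] by simp
    ultimately show "om (K1 (K2 x) - K2 (K1 x)) y + (if False \<and> q then - 1 else 1) * om x (K1 (K2 y) - K2 (K1 y)) = 0"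
      using a b by simp
  qed
  have o1: "\<And>x. Om (K1 x) = K1 (Om x)" using K1 unfolding Zsym_def scomm_def psign_def by (metis eq_iff_diff_eq_0 scale_one)
  have o2: "\<And>x. Om (K2 x) = K2 (Om x)" using K2 unfolding Zsym_def scomm_def psign_def by (metis eq_iff_diff_eq_0 scale_one)
  have cm: "\<forall>x. scomm True False Om (\<lambda>x. K1 (K2 x) - K2 (K1 x)) x = 0"
    unfolding scomm_def psign_def using linear_diff[OF LO] o1 o2 by simp
  show ?thesis unfolding c Zsym_def using lin gh pa sy cm by blast
qed

theorem proposition3:
  fixes Vg :: "int \<Rightarrow> 'v::real_vector set" and P :: "bool \<Rightarrow> 'v set"
    and om :: "'v \<Rightarrow> 'v \<Rightarrow> real" and Om :: "'v \<Rightarrow> 'v" and g :: int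
  assumes "superspace Vg P om"
    and "brst_op Vg P om Om"
  shows
    \<comment> \<open>representatives of H^0_sym form a Lie algebra under the commutator\<close>
    "(\<forall>K1 K2. Zsym Vg P om Om K1 \<longrightarrow> Zsym Vg P om Om K2 \<longrightarrow>
        Zsym Vg P om Om (scomm False False K1 K2))
   \<comment> \<open>the action maps closed ghost-number-g states to closed ghost-number-g states\<close>
   \<and> (\<forall>K x. Zsym Vg P om Om K \<longrightarrow> closed_st Vg Om g x \<longrightarrow> closed_st Vg Om g (K x))
   \<comment> \<open>well-definedness of [K].[x] = [K x] on classes\<close>
   \<and> (\<forall>K K' x y. sym_eq Vg P om Om K K' \<longrightarrow> coh_eq Vg Om g x y
        \<longrightarrow> coh_eq Vg Om g (K x) (K' y))
   \<comment> \<open>linearity of the action in the state\<close>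
   \<and> (\<forall>K x y a b. Zsym Vg P om Om K \<longrightarrow> closed_st Vg Om g x \<longrightarrow> closed_st Vg Om g y \<longrightarrow>
        coh_eq Vg Om g (K (a *\<^sub>R x + b *\<^sub>R y)) (a *\<^sub>R K x + b *\<^sub>R K y))
   \<comment> \<open>Lie module property: [[K1],[K2]].[x] = [K1].([K2].[x]) - [K2].([K1].[x])\<close>
   \<and> (\<forall>K1 K2 x. Zsym Vg P om Om K1 \<longrightarrow> Zsym Vg P om Om K2 \<longrightarrow> closed_st Vg Om g x \<longrightarrow>
        coh_eq Vg Om g (scomm False False K1 K2 x) (K1 (K2 x) - K2 (K1 x)))"
proof -
  have sg: "\<And>g. subspace (Vg g)" using assms(1) unfolding superspace_def by auto
  have LO: "linear Om" using assms(2) unfolding brst_op_def by auto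
  have A: "\<forall>K x. Zsym Vg P om Om K \<longrightarrow> closed_st Vg Om g x \<longrightarrow> closed_st Vg Om g (K x)"
    using zsym_closed[OF assms] by blast
  have C: "\<forall>K K' x y. sym_eq Vg P om Om K K' \<longrightarrow> coh_eq Vg Om g x y
        \<longrightarrow> coh_eq Vg Om g (K x) (K' y)"
  proof (intro allI impI)
    fix K K' x y assume se: "sym_eq Vg P om Om K K'" and ce: "coh_eq Vg Om g x y"
    have K: "Zsym Vg P om Om K" and K': "Zsym Vg P om Om K'" using se unfolding sym_eq_def by auto
    obtain T where T: "linear T" "op_ghost Vg (-1) T"
      and TT: "\<And>x. K x - K' x = Om (T x) + T (Om x)"
      using se unfolding sym_eq_def Bsym_def scomm_def psign_def by auto
    have cx: "closed_st Vg Om g x" and cy: "closed_st Vg Om g y" using ce unfolding coh_eq_def by auto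
    obtain z where z: "z \<in> Vg (g-1)" "x - y = Om z" using ce unfolding coh_eq_def exact_st_def by auto
    have LK: "linear K" using K unfolding Zsym_def by auto
    have oK: "Om (K z) = K (Om z)" using K unfolding Zsym_def scomm_def psign_def by (metis eq_iff_diff_eq_0 scale_one)
    have Ty: "T (Om y) = 0" using cy T(1) linear_0 unfolding closed_st_def by auto
    have "K x - K' y = K (x - y) + (K y - K' y)" using linear_diff[OF LK] by simp
    also have "\<dots> = Om (K z + T y)" using z oK TT[of y] Ty linear_add[OF LO] by simp
    finally have eq: "K x - K' y = Om (K z + T y)" .
    have "K z \<in> Vg (g - 1)" using K z(1) unfolding Zsym_def op_ghost_def by force
    moreover have "T y \<in> Vg (g - 1)" using T(2) cy unfolding op_ghost_def closed_st_def by force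
    ultimately have "K z + T y \<in> Vg (g-1)" using sg by (simp add: subspace_add)
    then show "coh_eq Vg Om g (K x) (K' y)"
      using A K K' cx cy eq unfolding coh_eq_def exact_st_def by blast
  qed
  have z0: "exact_st Vg Om g 0" unfolding exact_st_def
    using sg[of "g-1"] linear_0[OF LO] by (metis subspace_0)
  have D: "\<forall>K x y a b. Zsym Vg P om Om K \<longrightarrow> closed_st Vg Om g x \<longrightarrow> closed_st Vg Om g y \<longrightarrow>
        coh_eq Vg Om g (K (a *\<^sub>R x + b *\<^sub>R y)) (a *\<^sub>R K x + b *\<^sub>R K y)"
  proof (intro allI impI)
    fix K x y a b assume K: "Zsym Vg P om Om K" and cx: "closed_st Vg Om g x" and cy: "closed_st Vg Om g y"
    have LK: "linear K" using K unfolding Zsym_def by auto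
    have cxy: "closed_st Vg Om g (a *\<^sub>R x + b *\<^sub>R y)"
      using cx cy sg[of g] linear_add[OF LO] linear_scale[OF LO]
      unfolding closed_st_def by (simp add: subspace_add subspace_scale)
    have e: "K (a *\<^sub>R x + b *\<^sub>R y) = a *\<^sub>R K x + b *\<^sub>R K y"
      using linear_add[OF LK] linear_scale[OF LK] by simp
    show "coh_eq Vg Om g (K (a *\<^sub>R x + b *\<^sub>R y)) (a *\<^sub>R K x + b *\<^sub>R K y)"
      using A K cxy z0 e unfolding coh_eq_def by (metis diff_self)
  qed
  have E: "\<forall>K1 K2 x. Zsym Vg P om Om K1 \<longrightarrow> Zsym Vg P om Om K2 \<longrightarrow> closed_st Vg Om g x \<longrightarrow>
        coh_eq Vg Om g (scomm False False K1 K2 x) (K1 (K2 x) - K2 (K1 x))"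
  proof (intro allI impI)
    fix K1 K2 x assume K1: "Zsym Vg P om Om K1" and K2: "Zsym Vg P om Om K2" and cx: "closed_st Vg Om g x"
    have c: "scomm False False K1 K2 x = K1 (K2 x) - K2 (K1 x)" unfolding scomm_def psign_def by simp
    have "closed_st Vg Om g (scomm False False K1 K2 x)"
      using A zsym_comm[OF assms K1 K2] cx by blast
    then show "coh_eq Vg Om g (scomm False False K1 K2 x) (K1 (K2 x) - K2 (K1 x))"
      using c z0 unfolding coh_eq_def by simp
  qed
  show ?thesis using zsym_comm[OF assms] A C D E by blast
qed

end
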